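(* Let $q$ be prime and let $S\in\mathbb{Z}_q^{k\times 2n}$ be the generator matrix of a non-degenerate stabilizer code $[[n,n-k,d]]_q$. Let $M\in\mathbb{Z}^{k\times 2n}$ be an invariant form of this code (i.e. $M\equiv S\pmod q$ and the rows of $M$ pairwise have integer symplectic product $0$), and let $B$ be the maximal absolute value of an entry of $M$. Set $$p^*=B^{2(d-1)}\,\bigl(2(d-1)\bigr)^{d-1}.$$ Then for every prime $p>p^*$, the code over $p$ levels given by the generator matrix $M \bmod p$, with parameters $[[n,n-k,d']]_p$, has distance $d'\ge d$.
   Context: For a prime $r$, $n$-qudit Paulis over $r$ levels (up to phase) are represented as vectors $(a|b)\in\mathbb{Z}_r^{2n}$ (exponents of $X$ and $Z$ on each qudit). The symplectic product of $u=(u_x|u_z)$ and $v=(v_x|v_z)$ is $u\odot v=\sum_{l=1}^n (v_{z,l}u_{x,l}-v_{x,l}u_{z,l})$, computed mod $r$ (or over $\mathbb{Z}$ for integer vectors). The weight of $(a|b)$ is the number of indices $l$ with $(a_l,b_l)\neq(0,0)$. For a stabilizer code over $r$ levels with generator matrix $G$ (rows pairwise symplectically orthogonal mod $r$), the distance is the minimum weight of a nonzero $e\in\mathbb{Z}_r^{2n}$ with $e\odot g\equiv 0\pmod r$ for every row $g$ of $G$ (an undetectable error). The code is non-degenerate if every non-identity element of the stabilizer group has weight at least $d$. The code has $k$ generators on $n$ qudits, hence $n-k$ logical qudits; notation $[[n,n-k,d]]_q$. *)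

theory Defs
  imports "HOL-Computational_Algebra.Primes"
begin

text \<open>An n-qudit Pauli (up to phase) is a pair (a, b) of integer vectors
  (X-exponents, Z-exponents), indexed by qudits l < n.  An element of
  Z_r^{2n} is represented by its canonical representatives in {0..<r}.\<close>

type_synonym pvec = "(nat \<Rightarrow> int) \<times> (nat \<Rightarrow> int)"

definition sympl :: "nat \<Rightarrow> pvec \<Rightarrow> pvec \<Rightarrow> int" where
  "sympl n u v = (\<Sum>l<n. snd v l * fst u l - fst v l * snd u l)"

definition weight :: "nat \<Rightarrow> pvec \<Rightarrow> nat" where
  "weight n u = card {l. l < n \<and> (fst u l, snd u l) \<noteq> (0, 0)}"

definition is_vec :: "nat \<Rightarrow> nat \<Rightarrow> pvec \<Rightarrow> bool" where
  "is_vec r n e \<longleftrightarrow> (\<forall>l<n. fst e l \<in> {0..<int r} \<and> snd e l \<in> {0..<int r})"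

definition reduce :: "nat \<Rightarrow> pvec \<Rightarrow> pvec" where
  "reduce r u = ((\<lambda>l. fst u l mod int r), (\<lambda>l. snd u l mod int r))"

definition undetectable :: "nat \<Rightarrow> nat \<Rightarrow> nat \<Rightarrow> (nat \<Rightarrow> pvec) \<Rightarrow> pvec \<Rightarrow> bool" where
  "undetectable r n k G e \<longleftrightarrow> is_vec r n e \<and> weight n e > 0 \<and>
     (\<forall>i<k. sympl n e (G i) mod int r = 0)"

definition distance :: "nat \<Rightarrow> nat \<Rightarrow> nat \<Rightarrow> (nat \<Rightarrow> pvec) \<Rightarrow> nat" where
  "distance r n k G = (LEAST w. \<exists>e. undetectable r n k G e \<and> weight n e = w)"

definition stab_group :: "nat \<Rightarrow> nat \<Rightarrow> nat \<Rightarrow> (nat \<Rightarrow> pvec) \<Rightarrow> pvec set" where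
  "stab_group r n k G = {reduce r ((\<lambda>l. \<Sum>i<k. c i * fst (G i) l), (\<lambda>l. \<Sum>i<k. c i * snd (G i) l))
                         | c :: nat \<Rightarrow> int. True}"

definition non_degenerate :: "nat \<Rightarrow> nat \<Rightarrow> nat \<Rightarrow> (nat \<Rightarrow> pvec) \<Rightarrow> nat \<Rightarrow> bool" where
  "non_degenerate r n k G d \<longleftrightarrow> (\<forall>s\<in>stab_group r n k G. weight n s > 0 \<longrightarrow> weight n s \<ge> d)"

definition stabilizer_generators :: "nat \<Rightarrow> nat \<Rightarrow> nat \<Rightarrow> (nat \<Rightarrow> pvec) \<Rightarrow> bool" where
  "stabilizer_generators r n k G \<longleftrightarrow> (\<forall>i<k. is_vec r n (G i)) \<and>
     (\<forall>i<k. \<forall>j<k. sympl n (G i) (G j) mod int r = 0)"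

definition invariant_form :: "nat \<Rightarrow> nat \<Rightarrow> nat \<Rightarrow> (nat \<Rightarrow> pvec) \<Rightarrow> (nat \<Rightarrow> pvec) \<Rightarrow> bool" where
  "invariant_form q n k S M \<longleftrightarrow>
     (\<forall>i<k. \<forall>l<n. fst (M i) l mod int q = fst (S i) l \<and> snd (M i) l mod int q = snd (S i) l) \<and>
     (\<forall>i<k. \<forall>j<k. sympl n (M i) (M j) = 0)"

definition max_entry :: "nat \<Rightarrow> nat \<Rightarrow> (nat \<Rightarrow> pvec) \<Rightarrow> int" where
  "max_entry n k M = Max (insert 0 ({\<bar>fst (M i) l\<bar> | i l. i < k \<and> l < n} \<union>
                                  {\<bar>snd (M i) l\<bar> | i l. i < k \<and> l < n}))"

end

theory Submission imports Defs "Jordan_Normal_Form.Determinant" begin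

definition detf :: "nat \<Rightarrow> (nat \<Rightarrow> nat \<Rightarrow> 'a::comm_ring_1) \<Rightarrow> 'a" where
  "detf m f = det (mat m m (\<lambda>(i,j). f i j))"

lemma elim_det:
  fixes f :: "nat \<Rightarrow> nat \<Rightarrow> 'a::comm_ring_1"
  assumes ag: "\<alpha> = \<gamma> * f 0 0"
  shows "f 0 0 * detf m (\<lambda>i j. \<alpha> * f (Suc i) (Suc j) - \<gamma> * f (Suc i) 0 * f 0 (Suc j))
         = \<alpha> ^ m * detf (Suc m) f"
proof -
  define F where "F = mat (Suc m) (Suc m) (\<lambda>(i,j). f i j)"
  define L where "L = mat (Suc m) (Suc m) (\<lambda>(i,j). if i = 0 then (if j = 0 then 1 else 0)
     else if j = 0 then - \<gamma> * f i 0 else if i = j then \<alpha> else (0::'a))"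
  have F: "F \<in> carrier_mat (Suc m) (Suc m)" and L: "L \<in> carrier_mat (Suc m) (Suc m)"
    unfolding F_def L_def by auto
  have "det L = prod_list (diag_mat L)"
    by (rule det_lower_triangular[OF _ L]) (auto simp: L_def)
  also have "\<dots> = \<alpha> ^ m"
  proof -
    have "diag_mat L = 1 # map (\<lambda>i. \<alpha>) [1..<Suc m]"
      unfolding diag_mat_def using L by (auto simp: L_def upt_conv_Cons simp del: upt_Suc intro!: map_cong)
    also have "\<dots> = 1 # replicate m \<alpha>" by (simp add: map_replicate_const)
    finally show ?thesis by simp
  qed
  finally have dL: "det L = \<alpha> ^ m" .
  have LF: "(L * F) $$ (i,j) = (if i = 0 then f 0 j else \<alpha> * f i j - \<gamma> * f i 0 * f 0 j)"
    if "i < Suc m" "j < Suc m" for i j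
  proof -
    have "(L * F) $$ (i,j) = (\<Sum>l<Suc m. L $$ (i,l) * f l j)"
      using that F L by (simp add: scalar_prod_def F_def lessThan_atLeast0 )
    also have "\<dots> = (if i = 0 then f 0 j else \<alpha> * f i j - \<gamma> * f i 0 * f 0 j)"
    proof (cases "i = 0")
      case True
      have "(\<Sum>l<Suc m. L $$ (i,l) * f l j) = (\<Sum>l<Suc m. (if l = 0 then f 0 j else 0))"
        by (rule sum.cong) (auto simp: L_def True)
      then show ?thesis using True by simp
    next
      case False
      have "(\<Sum>l<Suc m. L $$ (i,l) * f l j) = (\<Sum>l<Suc m. (if l = 0 then - \<gamma> * f i 0 * f 0 j else 0)
          + (if l = i then \<alpha> * f i j else 0))"
        by (rule sum.cong) (use False that in \<open>auto simp: L_def\<close>)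
      also have "\<dots> = - \<gamma> * f i 0 * f 0 j + \<alpha> * f i j"
        using that by (simp add: sum.distrib)
      finally show ?thesis using False by simp
    qed
    finally show ?thesis .
  qed
  have LFc: "L * F \<in> carrier_mat (Suc m) (Suc m)" using L F by auto
  have "det (L * F) = (\<Sum>i<Suc m. (L * F) $$ (i,0) * cofactor (L * F) i 0)"
    by (rule laplace_expansion_column[OF LFc]) simp
  also have "\<dots> = (\<Sum>i<Suc m. if i = 0 then f 0 0 * cofactor (L * F) 0 0 else 0)"
    by (rule sum.cong) (auto simp: LF ag)
  also have "\<dots> = f 0 0 * det (mat_delete (L * F) 0 0)"
    by (simp add: cofactor_def)
  also have "mat_delete (L * F) 0 0 = mat m m (\<lambda>(i,j). \<alpha> * f (Suc i) (Suc j) - \<gamma> * f (Suc i) 0 * f 0 (Suc j))"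
    proof -
    have dd: "dim_row (L*F) = Suc m" "dim_col (L*F) = Suc m" using LFc by auto
    show ?thesis by (rule eq_matI) (auto simp: mat_delete_def LF dd simp del: index_mult_mat)
  qed
  finally have "det (L * F) = f 0 0 * detf m (\<lambda>i j. \<alpha> * f (Suc i) (Suc j) - \<gamma> * f (Suc i) 0 * f 0 (Suc j))"
    by (simp add: detf_def)
  moreover have "det (L * F) = \<alpha> ^ m * detf (Suc m) f"
    using det_mult[OF L F] dL by (simp add: detf_def F_def)
  ultimately show ?thesis by simp
qed

lemma kernel_mod:
  fixes q :: nat and A :: "nat \<Rightarrow> nat \<Rightarrow> int"
  assumes q: "prime q"
  shows "\<forall>I. length I = m \<and> set I \<subseteq> {..<k} \<longrightarrow> int q dvd detf m (\<lambda>a b. A (I!a) b)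
  \<Longrightarrow> \<exists>x. (\<exists>j<m. \<not> int q dvd x j) \<and> (\<forall>i<k. int q dvd (\<Sum>j<m. A i j * x j))"
proof (induction m arbitrary: A)
  case 0
  have "int q dvd detf 0 (\<lambda>a b. A ([]!a) b)" using 0[rule_format, of "[]"] by simp
  hence "int q dvd 1" by (simp add: detf_def)
  hence "q dvd 1" by presburger
  with q show ?case by simp
next
  case (Suc m)
  have qi: "prime (int q)" using q by (simp add: prime_nat_int_transfer)
  show ?case
  proof (cases "\<forall>i<k. int q dvd A i 0")
    case True
    define x :: "nat \<Rightarrow> int" where "x = (\<lambda>j. if j = 0 then 1 else 0)"
    have "\<forall>i<k. (\<Sum>j<Suc m. A i j * x j) = A i 0"
      unfolding sum.lessThan_Suc_shift by (simp add: x_def)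
    moreover have "\<not> int q dvd x 0" using q by (auto simp: x_def)
    ultimately show ?thesis using True by (intro exI[of _ x]) auto
  next
    case False
    then obtain i0 where i0: "i0 < k" and na: "\<not> int q dvd A i0 0" by auto
    define a where "a = A i0 0"
    define A2 where "A2 = (\<lambda>i j. a * A i (Suc j) - A i 0 * A i0 (Suc j))"
    have "\<forall>I. length I = m \<and> set I \<subseteq> {..<k} \<longrightarrow> int q dvd detf m (\<lambda>a b. A2 (I!a) b)"
    proof (intro allI impI)
      fix I :: "nat list" assume I: "length I = m \<and> set I \<subseteq> {..<k}"
      define f where "f = (\<lambda>a' b. A ((i0#I)!a') b)"
      have e: "f 0 0 * detf m (\<lambda>i j. a * f (Suc i) (Suc j) - 1 * f (Suc i) 0 * f 0 (Suc j))
         = a ^ m * detf (Suc m) f"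
        by (rule elim_det) (simp add: f_def a_def)
      have "int q dvd detf (Suc m) f" using Suc.prems[rule_format, of "i0#I"] I i0 by (simp add: f_def)
      hence "int q dvd f 0 0 * detf m (\<lambda>i j. a * f (Suc i) (Suc j) - 1 * f (Suc i) 0 * f 0 (Suc j))"
        using e by simp
      moreover have "(\<lambda>i j. a * f (Suc i) (Suc j) - 1 * f (Suc i) 0 * f 0 (Suc j)) = (\<lambda>a b. A2 (I!a) b)"
        by (simp add: f_def A2_def)
      ultimately have "int q dvd a * detf m (\<lambda>a b. A2 (I!a) b)" by (simp add: f_def a_def)
      thus "int q dvd detf m (\<lambda>a b. A2 (I!a) b)"
        using qi na by (simp add: prime_dvd_mult_iff a_def)
    qed
    from Suc.IH[OF this] obtain x2 where x2n: "\<exists>j<m. \<not> int q dvd x2 j"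
      and x2k: "\<forall>i<k. int q dvd (\<Sum>j<m. A2 i j * x2 j)" by blast
    define s where "s = (\<Sum>j<m. A i0 (Suc j) * x2 j)"
    have "coprime a (int q)" using prime_imp_coprime[OF qi na] by (simp add: a_def coprime_commute)
    hence g: "gcd a (int q) = 1" by (simp add: coprime_iff_gcd_eq_1)
    from bezout_int[of a "int q"] obtain u v where "u * a + v * int q = 1" using g by auto
    hence "1 - a * u = v * int q" by (simp add: algebra_simps)
    hence qu: "int q dvd 1 - a * u" by simp
    define x where "x = (\<lambda>j. if j = 0 then - u * s else x2 (j - 1))"
    show ?thesis
    proof (rule exI[of _ x], intro conjI allI impI)
      from x2n obtain j where "j < m" "\<not> int q dvd x2 j" by blast
      thus "\<exists>j<Suc m. \<not> int q dvd x j" by (intro exI[of _ "Suc j"]) (simp add: x_def)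
    next
      fix i assume i: "i < k"
      have e1: "(\<Sum>j<Suc m. A i j * x j) = A i 0 * (- u * s) + (\<Sum>j<m. A i (Suc j) * x2 j)"
        unfolding sum.lessThan_Suc_shift by (simp add: x_def)
      have e2: "(\<Sum>j<m. A2 i j * x2 j) = a * (\<Sum>j<m. A i (Suc j) * x2 j) - A i 0 * s"
        by (simp add: A2_def s_def sum_distrib_left sum_subtractf left_diff_distrib mult.assoc)
      have alg: "\<And>T c. a * (c * (- u * s) + T) = c * s * (1 - a * u) + (a * T - c * s)"
        by (simp add: algebra_simps)
      have "a * (\<Sum>j<Suc m. A i j * x j) = A i 0 * s * (1 - a * u) + (\<Sum>j<m. A2 i j * x2 j)"
        unfolding e1 e2 by (rule alg)
      moreover have "int q dvd A i 0 * s * (1 - a * u)" using qu by simp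
      ultimately have "int q dvd a * (\<Sum>j<Suc m. A i j * x j)" using x2k i by simp
      thus "int q dvd (\<Sum>j<Suc m. A i j * x j)" using qi na by (simp add: prime_dvd_mult_iff a_def)
    qed
  qed
qed


lemma det_kernel_mod:
  fixes p :: nat and C :: "nat \<Rightarrow> nat \<Rightarrow> int"
  assumes p: "prime p" and nd: "\<not> int p dvd detf m C"
    and h: "\<forall>i<m. int p dvd (\<Sum>j<m. C i j * x j)" and j: "j < m"
  shows "int p dvd x j"
proof -
  define Cm where "Cm = mat m m (\<lambda>(i,j). C i j)"
  define xv where "xv = vec m x"
  have Cc: "Cm \<in> carrier_mat m m" by (simp add: Cm_def)
  have xc: "xv \<in> carrier_vec m" by (simp add: xv_def)
  note ad = adj_mat[OF Cc]
  have "(adj_mat Cm * Cm) *\<^sub>v xv = adj_mat Cm *\<^sub>v (Cm *\<^sub>v xv)"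
    using ad(1) Cc xc by simp
  hence eq: "((det Cm \<cdot>\<^sub>m 1\<^sub>m m) *\<^sub>v xv) $ j = (adj_mat Cm *\<^sub>v (Cm *\<^sub>v xv)) $ j"
    using ad(3) by simp
  have l: "((det Cm \<cdot>\<^sub>m 1\<^sub>m m) *\<^sub>v xv) $ j = det Cm * x j"
  proof -
    have "((det Cm \<cdot>\<^sub>m 1\<^sub>m m) *\<^sub>v xv) $ j = (\<Sum>l<m. (if j = l then det Cm else 0) * x l)"
      using j by (auto simp: scalar_prod_def xv_def lessThan_atLeast0 intro!: sum.cong)
    also have "\<dots> = (\<Sum>l<m. if j = l then det Cm * x l else 0)" by (rule sum.cong) auto
    also have "\<dots> = det Cm * x j" using j by simp
    finally show ?thesis .
  qed
  have r: "int p dvd (adj_mat Cm *\<^sub>v (Cm *\<^sub>v xv)) $ j"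
  proof -
    have cv: "(Cm *\<^sub>v xv) $ l = (\<Sum>j<m. C l j * x j)" if "l < m" for l
      using that by (simp add: Cm_def xv_def scalar_prod_def lessThan_atLeast0)
    have "(adj_mat Cm *\<^sub>v (Cm *\<^sub>v xv)) $ j = (\<Sum>l<m. adj_mat Cm $$ (j,l) * (Cm *\<^sub>v xv) $ l)"
      using j ad(1) Cc by (simp add: scalar_prod_def lessThan_atLeast0)
    also have "int p dvd \<dots>"
      by (rule dvd_sum) (use h cv in simp)
    finally show ?thesis .
  qed
  have "int p dvd det Cm * x j" using eq l r by simp
  moreover have "\<not> int p dvd det Cm" using nd by (simp add: detf_def Cm_def)
  moreover have "prime (int p)" using p by (simp add: prime_nat_int_transfer)
  ultimately show ?thesis by (simp add: prime_dvd_mult_iff)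
qed


lemma mult_delta_real: "(if c then 1 else 0) * (x::real) = (if c then x else 0)"
  "x * (if c then 1 else 0) = (if c then x else 0)" by simp_all

definition qf :: "nat \<Rightarrow> (nat \<Rightarrow> nat \<Rightarrow> real) \<Rightarrow> (nat \<Rightarrow> real) \<Rightarrow> real" where
  "qf m P y = (\<Sum>i<m. \<Sum>j<m. y i * P i j * y j)"

lemma qf_Suc: "qf (Suc m) P z = z 0 * P 0 0 * z 0 + z 0 * (\<Sum>j<m. P 0 (Suc j) * z (Suc j))
   + (\<Sum>i<m. z (Suc i) * P (Suc i) 0) * z 0 + qf m (\<lambda>i j. P (Suc i) (Suc j)) (\<lambda>i. z (Suc i))"
  unfolding qf_def sum.lessThan_Suc_shift
  by (simp add: sum.distrib sum_distrib_left sum_distrib_right algebra_simps)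

lemma qf_unit: "u < m \<Longrightarrow> qf m P (\<lambda>i. if i = u then 1 else 0) = P u u"
  unfolding qf_def by (simp add: mult_delta_real)

lemma psd_det_le:
  fixes P :: "nat \<Rightarrow> nat \<Rightarrow> real"
  shows "(\<forall>i<m. \<forall>j<m. P i j = P j i) \<Longrightarrow> (\<forall>y. qf m P y \<ge> 0) \<Longrightarrow> detf m P \<le> (\<Prod>i<m. P i i)"
proof (induction m arbitrary: P)
  case 0
  then show ?case by (simp add: detf_def)
next
  case (Suc m)
  have diag: "P i i \<ge> 0" if "i < Suc m" for i
    using Suc.prems(2)[rule_format, of "\<lambda>l. if l = i then 1 else 0"] qf_unit[OF that] by simp
  define c where "c = P 0 0"
  have c0: "c \<ge> 0" using diag[of 0] by (simp add: c_def)
  show ?case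
  proof (cases "c = 0")
    case True
    have row0: "P 0 j = 0" if j: "j < Suc m" for j
    proof (cases j)
      case 0 thus ?thesis using True c_def by simp
    next
      case (Suc j')
      define b where "b = P 0 j"
      define d where "d = P j j"
      have quad: "2 * t * b + d \<ge> 0" for t
      proof -
        define z where "z = (\<lambda>i. if i = 0 then t else if i = j then 1 else (0::real))"
        have "qf (Suc m) P z = 2 * t * b + d"
        proof -
          have z1: "(\<lambda>i. z (Suc i)) = (\<lambda>i. if i = j' then 1 else 0)" by (auto simp: z_def Suc)
          have j'm: "j' < m" using j Suc by simp
          have s1: "(\<Sum>l<m. P 0 (Suc l) * z (Suc l)) = P 0 j"
            unfolding z1[THEN fun_cong] using j'm Suc by (simp add: mult_delta_real)
          have s2: "(\<Sum>l<m. z (Suc l) * P (Suc l) 0) = P j 0"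
            unfolding z1[THEN fun_cong] using j'm Suc by (simp add: mult_delta_real)
          have s3: "qf m (\<lambda>i j. P (Suc i) (Suc j)) (\<lambda>i. z (Suc i)) = P j j"
            unfolding z1 using qf_unit[OF j'm] Suc by simp
          have "P j 0 = P 0 j" using Suc.prems(1) j by auto
          thus ?thesis unfolding qf_Suc s1 s2 s3 using True by (simp add: z_def c_def b_def d_def algebra_simps)
        qed
        thus ?thesis using Suc.prems(2) by metis
      qed
      show ?thesis
      proof (rule ccontr)
        assume "P 0 j \<noteq> 0"
        hence "b \<noteq> 0" by (simp add: b_def)
        from quad[of "- (d + 1) / (2 * b)"] show False using \<open>b \<noteq> 0\<close> by (simp add: field_simps)
      qed
    qed
    have "detf (Suc m) P = 0"
    proof -
      have Pc: "mat (Suc m) (Suc m) (\<lambda>(i,j). P i j) \<in> carrier_mat (Suc m) (Suc m)" by simp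
      show ?thesis unfolding detf_def laplace_expansion_row[OF Pc, of 0, simplified]
        using row0 by simp
    qed
    moreover have "(\<Prod>i<Suc m. P i i) \<ge> 0" by (rule prod_nonneg) (use diag in auto)
    ultimately show ?thesis by simp
  next
    case False
    hence cpos: "c > 0" using c0 by simp
    define S where "S = (\<lambda>i j. 1 * P (Suc i) (Suc j) - (1/c) * P (Suc i) 0 * P 0 (Suc j))"
    have e: "P 0 0 * detf m S = 1 ^ m * detf (Suc m) P"
      unfolding S_def by (rule elim_det) (use cpos in \<open>simp add: c_def\<close>)
    have Ssym: "\<forall>i<m. \<forall>j<m. S i j = S j i"
      using Suc.prems(1) by (auto simp: S_def)
    have Spsd: "\<forall>y. qf m S y \<ge> 0"
    proof
      fix y
      define b where "b = (\<Sum>j<m. P 0 (Suc j) * y j)"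
      define t where "t = - b / c"
      define z where "z = (\<lambda>i. if i = 0 then t else y (i - 1))"
      have b2: "(\<Sum>i<m. y i * P (Suc i) 0) = b"
        unfolding b_def by (rule sum.cong) (use Suc.prems(1) in auto)
      have qS: "qf m S y = qf m (\<lambda>i j. P (Suc i) (Suc j)) y - b * b / c"
      proof -
        have "qf m S y = qf m (\<lambda>i j. P (Suc i) (Suc j)) y - (1/c) * ((\<Sum>i<m. y i * P (Suc i) 0) * (\<Sum>j<m. P 0 (Suc j) * y j))"
          unfolding qf_def S_def by (simp add: algebra_simps sum_subtractf sum_distrib_left sum_distrib_right)
        thus ?thesis using b2 b_def by simp
      qed
      have "qf (Suc m) P z = t * c * t + t * b + b * t + qf m (\<lambda>i j. P (Suc i) (Suc j)) y"
        unfolding qf_Suc by (simp add: z_def b_def[symmetric] b2 c_def)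
      also have "\<dots> = qf m S y" unfolding qS t_def using cpos by (simp add: field_simps power2_eq_square)
      finally show "qf m S y \<ge> 0" using Suc.prems(2) by metis
    qed
    have ih: "detf m S \<le> (\<Prod>i<m. S i i)" using Suc.IH[OF Ssym Spsd] .
    have Sd: "S i i \<ge> 0" if "i < m" for i
      using Spsd[rule_format, of "\<lambda>l. if l = i then 1 else 0"] qf_unit[OF that] by simp
    have Sle: "S i i \<le> P (Suc i) (Suc i)" if "i < m" for i
    proof -
      have "P (Suc i) 0 = P 0 (Suc i)" using Suc.prems(1) that by auto
      hence "(1/c) * P (Suc i) 0 * P 0 (Suc i) \<ge> 0" using cpos by simp
      thus ?thesis by (simp add: S_def)
    qed
    have "(\<Prod>i<m. S i i) \<le> (\<Prod>i<m. P (Suc i) (Suc i))"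
      by (rule prod_mono) (use Sd Sle in auto)
    with ih have "detf m S \<le> (\<Prod>i<m. P (Suc i) (Suc i))" by linarith
    hence "c * detf m S \<le> c * (\<Prod>i<m. P (Suc i) (Suc i))" using cpos by simp
    moreover have "detf (Suc m) P = c * detf m S" using e by (simp add: c_def)
    moreover have "(\<Prod>i<Suc m. P i i) = c * (\<Prod>i<m. P (Suc i) (Suc i))"
      unfolding prod.lessThan_Suc_shift by (simp add: c_def)
    ultimately show ?thesis by simp
  qed
qed


lemma hadamard_int:
  fixes C :: "nat \<Rightarrow> nat \<Rightarrow> int" and B :: int
  assumes bd: "\<forall>i<m. \<forall>j<m. \<bar>C i j\<bar> \<le> B"
  shows "(detf m C)^2 \<le> (int m * B^2)^m"
proof -
  define Cr where "Cr = mat m m (\<lambda>(i,j). real_of_int (C i j))"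
  have Crc: "Cr \<in> carrier_mat m m" by (simp add: Cr_def)
  have "map_mat real_of_int (mat m m (\<lambda>(i,j). C i j)) = Cr"
    by (rule eq_matI) (auto simp: Cr_def)
  hence dC: "det Cr = real_of_int (detf m C)"
    unfolding detf_def using of_int_hom.hom_det by metis
  define P where "P = (\<lambda>i j. \<Sum>l<m. real_of_int (C i l) * real_of_int (C j l))"
  have "mat m m (\<lambda>(i,j). P i j) = Cr * transpose_mat Cr"
    by (rule eq_matI) (auto simp: P_def Cr_def scalar_prod_def lessThan_atLeast0)
  hence dP: "detf m P = (det Cr)^2"
    unfolding detf_def using det_mult[OF Crc, of "transpose_mat Cr"] det_transpose[OF Crc] Crc
    by (simp add: power2_eq_square)
  have sym: "\<forall>i<m. \<forall>j<m. P i j = P j i" by (simp add: P_def mult.commute)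
  have psd: "\<forall>y. qf m P y \<ge> 0"
  proof
    fix y
    have "qf m P y = (\<Sum>i<m. \<Sum>j<m. \<Sum>l<m. y i * real_of_int (C i l) * (real_of_int (C j l) * y j))"
      unfolding qf_def P_def by (simp add: sum_distrib_left sum_distrib_right mult.assoc)
    also have "\<dots> = (\<Sum>i<m. \<Sum>l<m. \<Sum>j<m. y i * real_of_int (C i l) * (real_of_int (C j l) * y j))"
      by (rule sum.cong[OF refl], rule sum.swap)
    also have "\<dots> = (\<Sum>l<m. \<Sum>i<m. \<Sum>j<m. y i * real_of_int (C i l) * (real_of_int (C j l) * y j))"
      by (rule sum.swap)
    also have "\<dots> = (\<Sum>l<m. (\<Sum>i<m. y i * real_of_int (C i l)) * (\<Sum>j<m. real_of_int (C j l) * y j))"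
      by (simp only: sum_product)
    also have "\<dots> = (\<Sum>l<m. (\<Sum>i<m. y i * real_of_int (C i l))^2)"
      by (simp add: power2_eq_square mult.commute)
    also have "\<dots> \<ge> 0" by (rule sum_nonneg) simp
    finally show "qf m P y \<ge> 0" .
  qed
  have "detf m P \<le> (\<Prod>i<m. P i i)" using psd_det_le sym psd by blast
  also have "\<dots> \<le> (\<Prod>i<m. real m * real_of_int B ^ 2)"
  proof (rule prod_mono)
    fix i assume i: "i \<in> {..<m}"
    have "P i i = (\<Sum>l<m. (real_of_int (C i l))^2)" by (simp add: P_def power2_eq_square)
    also have "\<dots> \<le> (\<Sum>l<m. real_of_int B ^ 2)"
    proof (rule sum_mono)
      fix l assume l: "l \<in> {..<m}"
      have "\<bar>C i l\<bar> \<le> B" using bd i l by auto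
      hence "\<bar>real_of_int (C i l)\<bar> \<le> real_of_int B" by linarith
      hence "\<bar>real_of_int (C i l)\<bar>^2 \<le> real_of_int B ^ 2" by (rule power_mono) simp
      thus "(real_of_int (C i l))^2 \<le> real_of_int B ^ 2" by simp
    qed
    finally show "0 \<le> P i i \<and> P i i \<le> real m * real_of_int B ^ 2"
      by (auto simp: P_def intro!: sum_nonneg)
  qed
  also have "\<dots> = (real m * real_of_int B ^ 2) ^ m" by simp
  finally have "(real_of_int (detf m C))^2 \<le> (real m * real_of_int B ^ 2) ^ m" using dP dC by simp
  hence "real_of_int ((detf m C)^2) \<le> real_of_int ((int m * B^2)^m)" by simp
  thus ?thesis by linarith
qed


lemma sum_lessThan_add: fixes f :: "nat \<Rightarrow> 'a::comm_monoid_add" and n :: nat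
  shows "(\<Sum>j<m + n. f j) = (\<Sum>j<m. f j) + (\<Sum>j<n. f (m + j))"
  by (induction n) (auto simp: add.commute add.left_commute)

lemma sympl_cong:
  assumes "\<forall>l<n. int r dvd fst u l - fst u' l \<and> int r dvd snd u l - snd u' l"
    and "\<forall>l<n. int r dvd fst v l - fst v' l \<and> int r dvd snd v l - snd v' l"
  shows "int r dvd sympl n u v - sympl n u' v'"
proof -
  have "sympl n u v - sympl n u' v' = (\<Sum>l<n. (snd v l * fst u l - fst v l * snd u l) - (snd v' l * fst u' l - fst v' l * snd u' l))"
    unfolding sympl_def by (simp add: sum_subtractf)
  also have "int r dvd \<dots>"
  proof (rule dvd_sum)
    fix l assume l: "l \<in> {..<n}"
    have e: "(snd v l * fst u l - fst v l * snd u l) - (snd v' l * fst u' l - fst v' l * snd u' l)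
      = snd v l * (fst u l - fst u' l) + (snd v l - snd v' l) * fst u' l
        - (fst v l * (snd u l - snd u' l) + (fst v l - fst v' l) * snd u' l)"
      by (simp add: algebra_simps)
    show "int r dvd (snd v l * fst u l - fst v l * snd u l) - (snd v' l * fst u' l - fst v' l * snd u' l)"
      unfolding e using assms l by (intro dvd_diff dvd_add) (simp_all add: dvd_mult dvd_mult2)
  qed
  finally show ?thesis .
qed

lemma sympl_antisym: "sympl n u v = - sympl n v u"
  unfolding sympl_def by (simp add: sum_negf[symmetric] algebra_simps)

lemma weight_zero: "weight n u = 0 \<Longrightarrow> l < n \<Longrightarrow> fst u l = 0 \<and> snd u l = 0"
  unfolding weight_def by auto

lemma exists_undetectable:
  assumes r: "r \<ge> 2" and n: "n \<ge> 1" and sg: "stabilizer_generators r n k G"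
  shows "\<exists>e. undetectable r n k G e"
proof (cases "\<exists>j<k. weight n (G j) > 0")
  case True
  then obtain j where j: "j < k" "weight n (G j) > 0" by blast
  show ?thesis
    using sg j unfolding stabilizer_generators_def undetectable_def by (intro exI[of _ "G j"]) auto
next
  case False
  hence z: "\<And>j l. j < k \<Longrightarrow> l < n \<Longrightarrow> fst (G j) l = 0 \<and> snd (G j) l = 0"
    using weight_zero by blast
  define e :: pvec where "e = ((\<lambda>l. if l = 0 then 1 else 0), (\<lambda>l. 0))"
  have "{l. l < n \<and> (fst e l, snd e l) \<noteq> (0, 0)} = {0}" using n by (auto simp: e_def)
  hence w: "weight n e = 1" by (simp add: weight_def)
  have "sympl n e (G i) = 0" if "i < k" for i
    unfolding sympl_def using z[OF that] by (intro sum.neutral) auto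
  moreover have "is_vec r n e" using r by (auto simp: is_vec_def e_def)
  ultimately show ?thesis using w unfolding undetectable_def by (intro exI[of _ e]) auto
qed


definition crd :: "nat list \<Rightarrow> pvec \<Rightarrow> nat \<Rightarrow> int" where
  "crd T u j = (if j < length T then fst u (T!j) else snd u (T!(j - length T)))"

definition Acol :: "nat list \<Rightarrow> pvec \<Rightarrow> nat \<Rightarrow> int" where
  "Acol T v j = (if j < length T then snd v (T!j) else - fst v (T!(j - length T)))"

lemma sum_set_nth: "distinct T \<Longrightarrow> sum g (set T) = (\<Sum>t<length T. g (T!t))"
  by (simp add: sum_list_distinct_conv_sum_set[symmetric] sum_list_sum_nth lessThan_atLeast0)

lemma sympl_support:
  assumes T: "distinct T" "set T \<subseteq> {..<n}"
    and u0: "\<forall>l<n. l \<notin> set T \<longrightarrow> fst u l = 0 \<and> snd u l = 0"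
  shows "sympl n u v = (\<Sum>j<2*length T. Acol T v j * crd T u j)"
proof -
  define g where "g = (\<lambda>l. snd v l * fst u l - fst v l * snd u l)"
  have "sympl n u v = sum g {..<n}" by (simp add: sympl_def g_def)
  also have "\<dots> = sum g (set T)"
    by (rule sum.mono_neutral_right) (use T u0 in \<open>auto simp: g_def\<close>)
  also have "\<dots> = (\<Sum>t<length T. g (T!t))" by (rule sum_set_nth[OF T(1)])
  also have "\<dots> = (\<Sum>t<length T. snd v (T!t) * fst u (T!t)) + (\<Sum>t<length T. (- fst v (T!t)) * snd u (T!t))"
    by (simp add: g_def sum.distrib[symmetric] sum_subtractf[symmetric])
  also have "\<dots> = (\<Sum>j<length T + length T. Acol T v j * crd T u j)"
    unfolding sum_lessThan_add by (simp add: Acol_def crd_def)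
  finally show ?thesis by (simp add: mult_2)
qed


lemma idx_nth: "distinct T \<Longrightarrow> t < length T \<Longrightarrow> (LEAST s. T!s = T!t) = t"
proof -
  assume T: "distinct T" and t: "t < length T"
  define s where "s = (LEAST s. T!s = T!t)"
  have "s \<le> t" unfolding s_def by (rule Least_le) simp
  moreover have "T!s = T!t" unfolding s_def by (rule LeastI[of _ t]) simp
  ultimately show ?thesis using T t nth_eq_iff_index_eq[OF T] unfolding s_def[symmetric] by auto
qed

lemma red_dvd: "int r dvd (x mod int r - x)"
  using mod_eq_dvd_iff[of "x mod int r" "int r" x] by simp

lemma mod_range: "prime r \<Longrightarrow> x mod int r \<in> {0..<int r}"
  using prime_gt_0_nat[of r] by auto

lemma dvd_range_zero: "int r dvd a \<Longrightarrow> a \<in> {0..<int r} \<Longrightarrow> a = 0"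
  using zdvd_not_zless[of a "int r"] by fastforce

theorem theorem3:
  fixes q p n k d :: nat and S M :: "nat \<Rightarrow> pvec"
  assumes "prime q"
    and "stabilizer_generators q n k S"
    and "distance q n k S = d"
    and "non_degenerate q n k S d"
    and "invariant_form q n k S M"
    and "prime p"
    and "int p > max_entry n k M ^ (2 * (d - 1)) * int (2 * (d - 1)) ^ (d - 1)"
  shows "distance p n k (\<lambda>i. reduce p (M i)) \<ge> d"
proof -
  note qp = assms(1) and pp = assms(6)
  define G' where "G' = (\<lambda>i. reduce p (M i))"
  have q2: "q \<ge> 2" using qp by (simp add: prime_ge_2_nat)
  have p2: "p \<ge> 2" using pp by (simp add: prime_ge_2_nat)
  have Gcong: "\<forall>l<n. int p dvd fst (G' i) l - fst (M i) l \<and> int p dvd snd (G' i) l - snd (M i) l" for i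
    by (simp add: G'_def reduce_def red_dvd)
  have Mcong: "\<forall>l<n. int q dvd fst (S i) l - fst (M i) l \<and> int q dvd snd (S i) l - snd (M i) l"
    if i: "i < k" for i
  proof -
    have "fst (M i) l mod int q = fst (S i) l \<and> snd (M i) l mod int q = snd (S i) l" if "l < n" for l
      using assms(5) i that unfolding invariant_form_def by blast
    thus ?thesis using red_dvd by metis
  qed
  have Morth: "sympl n (M i) (M j) = 0" if "i < k" "j < k" for i j
    using assms(5) that unfolding invariant_form_def by blast
  have sgp: "stabilizer_generators p n k G'"
    unfolding stabilizer_generators_def
  proof (intro conjI allI impI)
    fix i assume "i < k"
    show "is_vec p n (G' i)" using mod_range[OF pp] by (simp add: is_vec_def G'_def reduce_def)
  next
    fix i j assume ij: "i < k" "j < k"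
    have "int p dvd sympl n (G' i) (G' j) - sympl n (M i) (M j)"
      by (rule sympl_cong[OF Gcong Gcong])
    thus "sympl n (G' i) (G' j) mod int p = 0" using Morth[OF ij] by (simp add: dvd_eq_mod_eq_0)
  qed
  show ?thesis
  proof (cases "n = 0")
    case True
    have e: "(\<lambda>w. \<exists>e. undetectable r n k G e \<and> weight n e = w) = (\<lambda>w. False)" for r G
      using True by (auto simp: undetectable_def weight_def)
    have "distance p n k G' = distance q n k S" unfolding distance_def e ..
    thus ?thesis using assms(3) by (simp add: G'_def)
  next
    case False
    hence n1: "n \<ge> 1" by simp
    have dle: "d \<le> weight n e" if "undetectable q n k S e" for e
      unfolding assms(3)[symmetric] distance_def by (rule Least_le) (use that in blast)
    have key: "d \<le> weight n e" if U: "undetectable p n k G' e" for e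
    proof (rule ccontr)
      assume "\<not> d \<le> weight n e"
      hence wd: "weight n e < d" by simp
      define supp where "supp = {l. l < n \<and> (fst e l, snd e l) \<noteq> (0, 0)}"
      define T where "T = sorted_list_of_set supp"
      define w where "w = weight n e"
      have fs: "finite supp" by (simp add: supp_def)
      have Td: "distinct T" and Ts: "set T = supp" using fs by (simp_all add: T_def)
      have Tl: "length T = w" using fs by (simp add: T_def w_def weight_def supp_def)
      have Tn: "set T \<subseteq> {..<n}" using Ts by (auto simp: supp_def)
      have Tlt: "T!t < n" if "t < w" for t
      proof -
        have "T!t \<in> set T" using Tl that by simp
        thus ?thesis using Tn by auto
      qed
      have w0: "w > 0" using U by (simp add: undetectable_def w_def)
      have u0: "\<forall>l<n. l \<notin> set T \<longrightarrow> fst e l = 0 \<and> snd e l = 0" using Ts by (auto simp: supp_def)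
      define A where "A = (\<lambda>i j. Acol T (M i) j)"
      define x where "x = crd T e"
      have pk: "\<forall>i<k. int p dvd (\<Sum>j<2*w. A i j * x j)"
      proof (intro allI impI)
        fix i assume i: "i < k"
        have "sympl n e (G' i) mod int p = 0" using U i by (simp add: undetectable_def)
        hence h1: "int p dvd sympl n e (G' i)" by (simp add: dvd_eq_mod_eq_0)
        have h2: "int p dvd sympl n e (G' i) - sympl n e (M i)"
          by (rule sympl_cong[OF _ Gcong]) simp
        have "int p dvd sympl n e (G' i) - (sympl n e (G' i) - sympl n e (M i))"
          by (rule dvd_diff[OF h1 h2])
        hence "int p dvd sympl n e (M i)" by simp
        thus "int p dvd (\<Sum>j<2*w. A i j * x j)"
          using sympl_support[OF Td Tn u0, of "M i"] by (simp add: A_def x_def Tl)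
      qed
      have qk: "\<not> (\<exists>y. (\<exists>j<2*w. \<not> int q dvd y j) \<and> (\<forall>i<k. int q dvd (\<Sum>j<2*w. A i j * y j)))"
      proof
        assume "\<exists>y. (\<exists>j<2*w. \<not> int q dvd y j) \<and> (\<forall>i<k. int q dvd (\<Sum>j<2*w. A i j * y j))"
        then obtain y j0 where j0: "j0 < 2*w" "\<not> int q dvd y j0"
          and yk: "\<forall>i<k. int q dvd (\<Sum>j<2*w. A i j * y j)" by blast
        define ix where "ix = (\<lambda>l. LEAST s. T!s = l)"
        have ixn: "ix (T!t) = t" if "t < w" for t using idx_nth[OF Td] that Tl by (simp add: ix_def)
        define vp :: pvec where "vp = ((\<lambda>l. if l \<in> set T then y (ix l) else 0),
                                      (\<lambda>l. if l \<in> set T then y (w + ix l) else 0))"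
        define e' :: pvec where "e' = ((\<lambda>l. if l \<in> set T then y (ix l) mod int q else 0),
                                      (\<lambda>l. if l \<in> set T then y (w + ix l) mod int q else 0))"
        have crdv: "crd T vp j = y j" if "j < 2*w" for j
        proof (cases "j < w")
          case True
          then show ?thesis using Tl ixn[OF True] by (simp add: crd_def vp_def)
        next
          case False
          hence "j - w < w" using that by simp
          then show ?thesis using Tl ixn[of "j - w"] False by (simp add: crd_def vp_def)
        qed
        have vp0: "\<forall>l<n. l \<notin> set T \<longrightarrow> fst vp l = 0 \<and> snd vp l = 0" by (simp add: vp_def)
        have e'v: "\<forall>l<n. int q dvd fst e' l - fst vp l \<and> int q dvd snd e' l - snd vp l"
          by (simp add: e'_def vp_def red_dvd)
        have Ue': "undetectable q n k S e'"
          unfolding undetectable_def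
        proof (intro conjI allI impI)
          show "is_vec q n e'" using mod_range[OF qp] q2 by (auto simp: is_vec_def e'_def)
        next
          fix i assume i: "i < k"
          have "sympl n vp (M i) = (\<Sum>j<2*w. A i j * y j)"
            using sympl_support[OF Td Tn vp0, of "M i"] crdv by (simp add: A_def Tl)
          hence "int q dvd sympl n vp (M i)" using yk i by simp
          moreover have "int q dvd sympl n e' (S i) - sympl n vp (M i)"
            by (rule sympl_cong[OF e'v Mcong[OF i]])
          ultimately have "int q dvd (sympl n e' (S i) - sympl n vp (M i)) + sympl n vp (M i)"
            by (intro dvd_add)
          hence "int q dvd sympl n e' (S i)" by simp
          thus "sympl n e' (S i) mod int q = 0" by (simp add: dvd_eq_mod_eq_0)
        next
          have fin: "finite {l. l < n \<and> (fst e' l, snd e' l) \<noteq> (0, 0)}" by simp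
          obtain l where l: "l \<in> set T" "(fst e' l, snd e' l) \<noteq> (0,0)"
          proof (cases "j0 < w")
            case True
            have "T!j0 \<in> set T" using True Tl by simp
            moreover have "fst e' (T!j0) \<noteq> 0"
              using True Tl ixn[OF True] j0(2) calculation by (simp add: e'_def dvd_eq_mod_eq_0)
            ultimately show ?thesis using that by auto
          next
            case False
            hence jw: "j0 - w < w" using j0 by simp
            have "T!(j0 - w) \<in> set T" using jw Tl by simp
            moreover have "snd e' (T!(j0 - w)) \<noteq> 0"
              using False Tl ixn[OF jw] j0(2) calculation by (simp add: e'_def dvd_eq_mod_eq_0)
            ultimately show ?thesis using that by auto
          qed
          hence "l \<in> {l. l < n \<and> (fst e' l, snd e' l) \<noteq> (0, 0)}" using Tn by auto
          thus "0 < weight n e'" unfolding weight_def using fin card_gt_0_iff by blast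
        qed
        have "weight n e' \<le> card (set T)"
          unfolding weight_def by (rule card_mono) (auto simp: e'_def)
        also have "\<dots> = w" using Td Tl by (simp add: distinct_card)
        finally have "weight n e' < d" using wd w_def by simp
        with dle[OF Ue'] show False by simp
      qed
      have "\<not> (\<forall>I. length I = 2*w \<and> set I \<subseteq> {..<k} \<longrightarrow> int q dvd detf (2*w) (\<lambda>a b. A (I!a) b))"
        using kernel_mod[OF qp, of "2*w" k A] qk by blast
      then obtain I where I: "length I = 2*w" "set I \<subseteq> {..<k}"
        and nq: "\<not> int q dvd detf (2*w) (\<lambda>a b. A (I!a) b)" by blast
      have Ik: "I!a < k" if "a < 2*w" for a
      proof -
        have "I!a \<in> set I" using I(1) that by simp
        thus ?thesis using I(2) by auto
      qed
      define D where "D = detf (2*w) (\<lambda>a b. A (I!a) b)"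
      define B where "B = max_entry n k M"
      have D0: "D \<noteq> 0" using nq by (auto simp: D_def)
      have finM: "finite (insert 0 ({\<bar>fst (M i) l\<bar> | i l. i < k \<and> l < n} \<union>
                                  {\<bar>snd (M i) l\<bar> | i l. i < k \<and> l < n}))"
        by (simp add: finite_image_set2)
      have B0: "B \<ge> 0" unfolding B_def max_entry_def by (rule Max_ge[OF finM]) simp
      have Bb: "\<forall>a<2*w. \<forall>b<2*w. \<bar>A (I!a) b\<bar> \<le> B"
      proof (intro allI impI)
        fix a b assume a: "a < 2*w" and b: "b < 2*w"
        have "I!a \<in> set I" using I(1) a by simp
        hence ik: "I!a < k" using I(2) by auto
        show "\<bar>A (I!a) b\<bar> \<le> B"
        proof (cases "b < w")
          case True
          have "T!b < n" using Tlt True by simp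
          hence "\<bar>snd (M (I!a)) (T!b)\<bar> \<in> {\<bar>snd (M i) l\<bar> | i l. i < k \<and> l < n}" using ik by blast
          hence "\<bar>snd (M (I!a)) (T!b)\<bar> \<le> B" unfolding B_def max_entry_def by (intro Max_ge[OF finM]) blast
          thus ?thesis using True Tl by (simp add: A_def Acol_def)
        next
          case False
          hence "b - w < w" using b by simp
          hence "T!(b - w) < n" using Tlt by simp
          hence "\<bar>fst (M (I!a)) (T!(b - w))\<bar> \<in> {\<bar>fst (M i) l\<bar> | i l. i < k \<and> l < n}" using ik by blast
          hence "\<bar>fst (M (I!a)) (T!(b - w))\<bar> \<le> B" unfolding B_def max_entry_def by (intro Max_ge[OF finM]) blast
          thus ?thesis using False Tl by (simp add: A_def Acol_def)
        qed
      qed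
      have "D^2 \<le> (int (2*w) * B^2)^(2*w)" unfolding D_def by (rule hadamard_int[OF Bb])
      also have "\<dots> = (int (2*w) ^ w * B ^ (2*w))^2"
        by (simp add: power_mult_distrib power_mult[symmetric] mult.commute)
      finally have "\<bar>D\<bar>^2 \<le> (int (2*w) ^ w * B ^ (2*w))^2" by simp
      hence Dle: "\<bar>D\<bar> \<le> int (2*w) ^ w * B ^ (2*w)"
        by (rule power2_le_imp_le) (use B0 in simp)
      have wd1: "w \<le> d - 1" using wd w_def by simp
      have "int (2*w) ^ w \<le> int (2*(d-1)) ^ (d-1)"
      proof -
        have "int (2*w) ^ w \<le> int (2*(d-1)) ^ w" by (rule power_mono) (use wd1 in auto)
        also have "\<dots> \<le> int (2*(d-1)) ^ (d-1)" by (rule power_increasing) (use wd1 w0 in auto)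
        finally show ?thesis .
      qed
      moreover have "B ^ (2*w) \<le> B ^ (2*(d-1))"
      proof (cases "B = 0")
        case True
        show ?thesis unfolding True using w0 by (simp add: power_0_left)
      next
        case False hence "B \<ge> 1" using B0 by simp
        thus ?thesis by (intro power_increasing) (use wd1 in auto)
      qed
      ultimately have "int (2*w) ^ w * B ^ (2*w) \<le> B ^ (2*(d-1)) * int (2*(d-1)) ^ (d-1)"
        by (simp add: mult.commute mult_mono B0)
      hence Dp: "\<bar>D\<bar> < int p" using Dle assms(7) B_def by simp
      have npD: "\<not> int p dvd D"
      proof
        assume "int p dvd D"
        hence "\<bar>int p\<bar> \<le> \<bar>D\<bar>" using dvd_imp_le_int[OF D0] by blast
        thus False using Dp by simp
      qed
      have px: "int p dvd x j" if "j < 2*w" for j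
      proof (rule det_kernel_mod[OF pp _ _ that])
        show "\<not> int p dvd detf (2 * w) (\<lambda>a b. A (I!a) b)" using npD by (simp add: D_def)
        show "\<forall>i<2 * w. int p dvd (\<Sum>j<2 * w. A (I!i) j * x j)" using pk Ik by auto
      qed
      obtain l where l: "l \<in> supp" using w0 Tl Ts by (metis length_greater_0_conv nth_mem)
      then obtain t where t: "t < w" "T!t = l" using Ts Tl by (metis in_set_conv_nth)
      have "fst e l \<in> {0..<int p}" "snd e l \<in> {0..<int p}"
        using U l unfolding undetectable_def is_vec_def supp_def by auto
      moreover have "int p dvd fst e l" using px[of t] t by (simp add: x_def crd_def Tl)
      moreover have "int p dvd snd e l" using px[of "w + t"] t by (simp add: x_def crd_def Tl)
      ultimately have "fst e l = 0" "snd e l = 0" using dvd_range_zero by blast+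
      thus False using l by (simp add: supp_def)
    qed
    obtain e0 where e0: "undetectable p n k G' e0" using exists_undetectable[OF p2 n1 sgp] by blast
    have ex: "\<exists>w. \<exists>e. undetectable p n k G' e \<and> weight n e = w" using e0 by blast
    have "\<exists>e. undetectable p n k G' e \<and> weight n e = distance p n k G'"
      unfolding distance_def by (rule LeastI_ex[OF ex])
    then obtain e where e1: "undetectable p n k G' e" and e2: "weight n e = distance p n k G'" by blast
    have "d \<le> distance p n k G'" using key[OF e1] e2 by simp
    thus ?thesis by (simp add: G'_def)
  qed
qed

end
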